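(* Let $(X,\Sigma,\mu)$ be a $\sigma$-finite measure space, $n\ge1$, $b\in\mathbb{C}^n\setminus\{0\}$, $h\in L^\infty(X,\mu;\mathbb{C})$, and define $q:L^2(X,\mu;\mathbb{C}^n)\to\mathbb{C}^n$ by $q(F)=\int_X h(x)\langle b,f_x\rangle f_x\,d\mu(x)$. Suppose $\Phi\in q^{-1}(\{0\})$ is a continuous frame. Then, with $S_\Phi=q^{-1}(\{0\})\cap\big(q^{-1}(\{0\})-\Phi\big)$, the set $\mathcal{F}^{\mathbb{C}}_{(X,\mu),n}\cap S_\Phi$ is dense in $S_\Phi$ (for the norm of $L^2(X,\mu;\mathbb{C}^n)$).
   Context: The inner product on $\mathbb{C}^n$ is $\langle u,v\rangle=\sum_k u^k\overline{v^k}$. $q^{-1}(\{0\})-\Phi=\{G-\Phi: q(G)=0\}$. A family $\Phi=(\varphi_x)_{x\in X}$ in $\mathbb{C}^n$ (with measurable coordinates) is a continuous frame indexed by $(X,\mu)$ if there are $0<A\le B$ with $A\|v\|^2\le\int_X|\langle v,\varphi_x\rangle|^2d\mu(x)\le B\|v\|^2$ for all $v\in\mathbb{C}^n$. $\mathcal{F}^{\mathbb{C}}_{(X,\mu),n}$ denotes the set of such frames, viewed as a subset of $L^2(X,\mu;\mathbb{C}^n)$ (equivalently, the elements of $L^2(X,\mu;\mathbb{C}^n)$ whose coordinate functions are linearly independent in $L^2(X,\mu;\mathbb{C})$). *)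

theory Defs
  imports "HOL-Analysis.Analysis"
begin

text \<open>Vectors in C^n are modelled as complex^'n with 'n a finite type (n = CARD('n) >= 1).
  Elements of L^2(X,mu;C^n) are represented by measurable square-integrable functions.\<close>

definition cinner :: "complex^'n \<Rightarrow> complex^'n \<Rightarrow> complex" where
  "cinner u v = (\<Sum>k\<in>UNIV. u$k * cnj (v$k))"

definition L2 :: "'a measure \<Rightarrow> ('a \<Rightarrow> complex^'n) set" where
  "L2 M = {F. F \<in> borel_measurable M \<and> integrable M (\<lambda>x. (norm (F x))\<^sup>2)}"

definition L2norm :: "'a measure \<Rightarrow> ('a \<Rightarrow> complex^'n) \<Rightarrow> real" where
  "L2norm M F = sqrt (\<integral>x. (norm (F x))\<^sup>2 \<partial>M)"

definition Linfty :: "'a measure \<Rightarrow> ('a \<Rightarrow> complex) set" where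
  "Linfty M = {h. h \<in> borel_measurable M \<and> (\<exists>C. AE x in M. cmod (h x) \<le> C)}"

definition qmap :: "'a measure \<Rightarrow> ('a \<Rightarrow> complex) \<Rightarrow> complex^'n \<Rightarrow> ('a \<Rightarrow> complex^'n) \<Rightarrow> complex^'n" where
  "qmap M h b F = (\<integral>x. (h x * cinner b (F x)) *s F x \<partial>M)"

definition cont_frame :: "'a measure \<Rightarrow> ('a \<Rightarrow> complex^'n) \<Rightarrow> bool" where
  "cont_frame M \<Phi> \<longleftrightarrow> \<Phi> \<in> L2 M \<and>
     (\<exists>A B. 0 < A \<and> A \<le> B \<and> (\<forall>v::complex^'n.
        ennreal (A * (norm v)\<^sup>2) \<le> (\<integral>\<^sup>+x. ennreal ((cmod (cinner v (\<Phi> x)))\<^sup>2) \<partial>M) \<and>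
        (\<integral>\<^sup>+x. ennreal ((cmod (cinner v (\<Phi> x)))\<^sup>2) \<partial>M) \<le> ennreal (B * (norm v)\<^sup>2)))"

definition frames :: "'a measure \<Rightarrow> ('a \<Rightarrow> complex^'n) set" where
  "frames M = {\<Phi>. cont_frame M \<Phi>}"

definition S_set :: "'a measure \<Rightarrow> ('a \<Rightarrow> complex) \<Rightarrow> complex^'n \<Rightarrow> ('a \<Rightarrow> complex^'n) \<Rightarrow> ('a \<Rightarrow> complex^'n) set" where
  "S_set M h b \<Phi> = {G \<in> L2 M. qmap M h b G = 0 \<and>
      (\<exists>G' \<in> L2 M. qmap M h b G' = 0 \<and> G = (\<lambda>x. G' x - \<Phi> x))}"

end

theory Submission
  imports Defs
begin


lemma cinner_add_right: "cinner u (v + w) = cinner u v + cinner u w"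
  unfolding cinner_def by (simp add: sum.distrib algebra_simps)
lemma cinner_scaleR_right: "cinner u (r *\<^sub>R v) = of_real r * cinner u v"
  unfolding cinner_def by (simp add: sum_distrib_left scaleR_conv_of_real[where 'a=complex] algebra_simps)
lemma cinner_add_left: "cinner (u + v) w = cinner u w + cinner v w"
  unfolding cinner_def by (simp add: sum.distrib algebra_simps)
lemma cinner_diff_left: "cinner (u - v) w = cinner u w - cinner v w"
  unfolding cinner_def by (simp add: sum_subtractf algebra_simps)
lemma cinner_scaleR_left: "cinner (r *\<^sub>R u) w = of_real r * cinner u w"
  unfolding cinner_def by (simp add: sum_distrib_left scaleR_conv_of_real[where 'a=complex] algebra_simps)
lemma cinner_zero_left[simp]: "cinner 0 w = 0"
  unfolding cinner_def by simp
lemma cinner_zero_right[simp]: "cinner u 0 = 0"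
  unfolding cinner_def by simp
lemma cinner_sum_left: "cinner (\<Sum>t\<in>T. f t) w = (\<Sum>t\<in>T. cinner (f t) w)"
  by (induction T rule: infinite_finite_induct) (auto simp: cinner_add_left)

lemma cmod_cinner_le: "cmod (cinner u v) \<le> norm u * norm v"
proof -
  have "cmod (cinner u v) \<le> (\<Sum>k\<in>UNIV. cmod (u$k) * cmod (v$k))"
    unfolding cinner_def by (rule order_trans[OF norm_sum]) (simp add: norm_mult)
  also have "\<dots> = (\<Sum>k\<in>UNIV. \<bar>cmod (u$k)\<bar> * \<bar>cmod (v$k)\<bar>)" by simp
  also have "\<dots> \<le> L2_set (\<lambda>k. cmod (u$k)) UNIV * L2_set (\<lambda>k. cmod (v$k)) UNIV"
    by (rule L2_set_mult_ineq)
  finally show ?thesis by (simp add: norm_vec_def)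
qed

lemma norm_smult_vec: "norm (c *s (v::complex^'n)) = cmod c * norm v"
  unfolding norm_vec_def
  by (simp add: norm_mult L2_set_right_distrib[symmetric] mult.commute)

lemma meas_cinner[measurable]:
  "F \<in> borel_measurable M \<Longrightarrow> (\<lambda>x. cinner v (F x)) \<in> borel_measurable M"
  by (rule borel_measurable_continuous_on[where f="cinner v"]) (auto simp: cinner_def intro!: continuous_intros)

lemma meas_smult:
  fixes c :: "'a \<Rightarrow> complex" and V :: "'a \<Rightarrow> complex^'n"
  shows "c \<in> borel_measurable M \<Longrightarrow> V \<in> borel_measurable M \<Longrightarrow> (\<lambda>x. c x *s V x) \<in> borel_measurable M"
  by (rule borel_measurable_continuous_Pair[where H="\<lambda>c v. c *s v"])
     (auto simp: vector_scalar_mult_def intro!: continuous_intros)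

lemma scaleR_smult_vec: "r *\<^sub>R (v::complex^'n) = of_real r *s v"
  by (simp add: vec_eq_iff scaleR_conv_of_real[where 'a=complex])


lemma sq_bound: "(a + b::real)\<^sup>2 \<le> 2 * a\<^sup>2 + 2 * b\<^sup>2"
proof -
  have "0 \<le> (a - b)\<^sup>2" by simp
  then show ?thesis by (simp add: power2_eq_square algebra_simps)
qed

lemma ab_bound: "(a::real) * b \<le> a\<^sup>2 + b\<^sup>2"
proof -
  have "0 \<le> (a - b)\<^sup>2" by simp
  then have "2*(a*b) \<le> a*a + b*b" by (simp add: power2_eq_square algebra_simps)
  moreover have "0 \<le> a*a" "0 \<le> b*b" by auto
  ultimately show ?thesis unfolding power2_eq_square by linarith
qed

lemma L2_comb:
  fixes U V :: "'a \<Rightarrow> complex^'n"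
  assumes "U \<in> L2 M" "V \<in> L2 M"
  shows "(\<lambda>x. U x + r *\<^sub>R V x) \<in> L2 M"
proof -
  have mU: "U \<in> borel_measurable M" and iU: "integrable M (\<lambda>x. (norm (U x))\<^sup>2)"
    and mV: "V \<in> borel_measurable M" and iV: "integrable M (\<lambda>x. (norm (V x))\<^sup>2)"
    using assms by (auto simp: L2_def)
  have m: "(\<lambda>x. U x + r *\<^sub>R V x) \<in> borel_measurable M" using mU mV by measurable
  have "integrable M (\<lambda>x. 2 * (norm (U x))\<^sup>2 + 2 * r\<^sup>2 * (norm (V x))\<^sup>2)"
    using iU iV by simp
  note I = this
  have pw: "norm ((norm (U x + r *\<^sub>R V x))\<^sup>2) \<le> norm (2 * (norm (U x))\<^sup>2 + 2 * r\<^sup>2 * (norm (V x))\<^sup>2)" for x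
  proof -
    have a: "norm (U x + r *\<^sub>R V x) \<le> norm (U x) + \<bar>r\<bar> * norm (V x)"
      by (metis norm_scaleR norm_triangle_ineq)
    have "(norm (U x + r *\<^sub>R V x))\<^sup>2 \<le> (norm (U x) + \<bar>r\<bar> * norm (V x))\<^sup>2"
      using a by (intro power_mono) auto
    also have "\<dots> \<le> 2 * (norm (U x))\<^sup>2 + 2 * r\<^sup>2 * (norm (V x))\<^sup>2"
      using sq_bound[of "norm (U x)" "\<bar>r\<bar> * norm (V x)"] by (simp add: power_mult_distrib)
    finally show ?thesis by simp
  qed
  have mm: "(\<lambda>x. (norm (U x + r *\<^sub>R V x))\<^sup>2) \<in> borel_measurable M" using m by measurable
  have "integrable M (\<lambda>x. (norm (U x + r *\<^sub>R V x))\<^sup>2)"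
    by (rule Bochner_Integration.integrable_bound[OF I mm]) (intro AE_I2 pw)
  with m show ?thesis by (simp add: L2_def)
qed

lemma Linfty_bound:
  assumes "h \<in> Linfty M"
  obtains C where "C \<ge> 0" "AE x in M. cmod (h x) \<le> C"
proof -
  from assms obtain C where "AE x in M. cmod (h x) \<le> C" by (auto simp: Linfty_def)
  then have "AE x in M. cmod (h x) \<le> max C 0" by eventually_elim auto
  then show ?thesis using that[of "max C 0"] by auto
qed

lemma integrable_q:
  fixes U V :: "'a \<Rightarrow> complex^'n"
  assumes h: "h \<in> Linfty M" and U: "U \<in> L2 M" and V: "V \<in> L2 M"
  shows "integrable M (\<lambda>x. (h x * cinner b (U x)) *s V x)"
proof -
  obtain C where C0: "C \<ge> 0" and C: "AE x in M. cmod (h x) \<le> C" using h Linfty_bound by blast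
  have mU: "U \<in> borel_measurable M" and iU: "integrable M (\<lambda>x. (norm (U x))\<^sup>2)"
    and mV: "V \<in> borel_measurable M" and iV: "integrable M (\<lambda>x. (norm (V x))\<^sup>2)"
    using U V by (auto simp: L2_def)
  have mh: "h \<in> borel_measurable M" using h by (simp add: Linfty_def)
  have m: "(\<lambda>x. (h x * cinner b (U x)) *s V x) \<in> borel_measurable M"
    by (intro meas_smult borel_measurable_times meas_cinner mh mU mV)
  have "integrable M (\<lambda>x. C * norm b * ((norm (U x))\<^sup>2 + (norm (V x))\<^sup>2))"
    using iU iV by simp
  note I = this
  have "AE x in M. norm ((h x * cinner b (U x)) *s V x) \<le> norm (C * norm b * ((norm (U x))\<^sup>2 + (norm (V x))\<^sup>2))"
    using C
  proof eventually_elim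
    case (elim x)
    have "norm ((h x * cinner b (U x)) *s V x) = cmod (h x) * cmod (cinner b (U x)) * norm (V x)"
      by (simp add: norm_smult_vec norm_mult)
    also have "\<dots> \<le> C * (norm b * norm (U x)) * norm (V x)"
      using elim cmod_cinner_le[of b "U x"] C0
      by (intro mult_mono) auto
    also have "\<dots> = C * norm b * (norm (U x) * norm (V x))" by simp
    also have "\<dots> \<le> C * norm b * ((norm (U x))\<^sup>2 + (norm (V x))\<^sup>2)"
      using C0 ab_bound[of "norm (U x)" "norm (V x)"] by (intro mult_left_mono) auto
    finally show ?case using C0 by simp
  qed
  then show ?thesis
    by (rule Bochner_Integration.integrable_bound[OF I m])
qed


lemma pointwise_exp:
  fixes g p :: "complex^'n"
  shows "(c * cinner b (g + s *\<^sub>R p)) *s (g + s *\<^sub>R p) =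
    (c * cinner b g) *s g + s *\<^sub>R ((c * cinner b g) *s p + (c * cinner b p) *s g)
    + s\<^sup>2 *\<^sub>R ((c * cinner b p) *s p)"
  by (simp add: vec_eq_iff cinner_add_right cinner_scaleR_right scaleR_conv_of_real[where 'a=complex]
      algebra_simps power2_eq_square)

lemma qmap_comb:
  fixes G P :: "'a \<Rightarrow> complex^'n"
  assumes h: "h \<in> Linfty M" and G: "G \<in> L2 M" and P: "P \<in> L2 M"
  shows "qmap M h b (\<lambda>x. G x + s *\<^sub>R P x) = qmap M h b G
     + s *\<^sub>R (\<integral>x. (h x * cinner b (G x)) *s P x + (h x * cinner b (P x)) *s G x \<partial>M)
     + s\<^sup>2 *\<^sub>R qmap M h b P"
proof -
  have i1: "integrable M (\<lambda>x. (h x * cinner b (G x)) *s G x)" by (rule integrable_q[OF h G G])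
  have i2: "integrable M (\<lambda>x. (h x * cinner b (G x)) *s P x + (h x * cinner b (P x)) *s G x)"
    by (intro Bochner_Integration.integrable_add integrable_q[OF h G P] integrable_q[OF h P G])
  have i3: "integrable M (\<lambda>x. (h x * cinner b (P x)) *s P x)" by (rule integrable_q[OF h P P])
  show ?thesis
    unfolding qmap_def pointwise_exp
    using i1 i2 i3 by (simp add: Bochner_Integration.integral_add)
qed


lemma S_comb:
  fixes G P :: "'a \<Rightarrow> complex^'n"
  assumes h: "h \<in> Linfty M" and P: "P \<in> L2 M" and qP: "qmap M h b P = 0"
    and GS: "G \<in> S_set M h b P"
  shows "(\<lambda>x. G x + s *\<^sub>R P x) \<in> S_set M h b P"
proof -
  from GS obtain G' where G: "G \<in> L2 M" and qG: "qmap M h b G = 0" and G': "G' \<in> L2 M"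
    and qG': "qmap M h b G' = 0" and GG': "G = (\<lambda>x. G' x - P x)"
    by (auto simp: S_set_def)
  define X where "X = (\<integral>x. (h x * cinner b (G x)) *s P x + (h x * cinner b (P x)) *s G x \<partial>M)"
  have q: "qmap M h b (\<lambda>x. G x + s *\<^sub>R P x) = s *\<^sub>R X" for s
    using qmap_comb[OF h G P, of b s] qG qP by (simp add: X_def)
  have "(\<lambda>x. G x + 1 *\<^sub>R P x) = G'" using GG' by auto
  then have X0: "X = 0" using q[of 1] qG' by simp
  have "(\<lambda>x. G x + s *\<^sub>R P x) = (\<lambda>x. (G x + (s + 1) *\<^sub>R P x) - P x)"
    by (auto simp: algebra_simps)
  moreover have "(\<lambda>x. G x + s *\<^sub>R P x) \<in> L2 M" "(\<lambda>x. G x + (s+1) *\<^sub>R P x) \<in> L2 M"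
    by (rule L2_comb[OF G P])+
  moreover have "qmap M h b (\<lambda>x. G x + s *\<^sub>R P x) = 0" "qmap M h b (\<lambda>x. G x + (s+1) *\<^sub>R P x) = 0"
    using q X0 by simp_all
  ultimately show ?thesis unfolding S_set_def by blast
qed

lemma integrable_Q:
  fixes F :: "'a \<Rightarrow> complex^'n"
  assumes F: "F \<in> L2 M"
  shows "integrable M (\<lambda>x. (cmod (cinner v (F x)))\<^sup>2)"
proof -
  have m: "F \<in> borel_measurable M" and i: "integrable M (\<lambda>x. (norm (F x))\<^sup>2)"
    using F by (auto simp: L2_def)
  have I: "integrable M (\<lambda>x. (norm v)\<^sup>2 * (norm (F x))\<^sup>2)" using i by simp
  have mm: "(\<lambda>x. (cmod (cinner v (F x)))\<^sup>2) \<in> borel_measurable M" using m by measurable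
  have "norm ((cmod (cinner v (F x)))\<^sup>2) \<le> norm ((norm v)\<^sup>2 * (norm (F x))\<^sup>2)" for x
  proof -
    have "(cmod (cinner v (F x)))\<^sup>2 \<le> (norm v * norm (F x))\<^sup>2"
      by (intro power_mono cmod_cinner_le) auto
    then show ?thesis by (simp add: power_mult_distrib)
  qed
  then show ?thesis by (intro Bochner_Integration.integrable_bound[OF I mm] AE_I2)
qed

lemma Q_upper:
  fixes F :: "'a \<Rightarrow> complex^'n"
  assumes F: "F \<in> L2 M"
  shows "(\<integral>\<^sup>+x. ennreal ((cmod (cinner v (F x)))\<^sup>2) \<partial>M) \<le> ennreal ((norm v)\<^sup>2 * (\<integral>x. (norm (F x))\<^sup>2 \<partial>M))"
proof -
  have i: "integrable M (\<lambda>x. (norm (F x))\<^sup>2)" using F by (auto simp: L2_def)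
  have "(\<integral>\<^sup>+x. ennreal ((cmod (cinner v (F x)))\<^sup>2) \<partial>M) \<le> (\<integral>\<^sup>+x. ennreal ((norm v)\<^sup>2 * (norm (F x))\<^sup>2) \<partial>M)"
  proof (intro nn_integral_mono ennreal_leI)
    fix x
    have "(cmod (cinner v (F x)))\<^sup>2 \<le> (norm v * norm (F x))\<^sup>2"
      by (intro power_mono cmod_cinner_le) auto
    then show "(cmod (cinner v (F x)))\<^sup>2 \<le> (norm v)\<^sup>2 * (norm (F x))\<^sup>2" by (simp add: power_mult_distrib)
  qed
  also have "\<dots> = ennreal (\<integral>x. (norm v)\<^sup>2 * (norm (F x))\<^sup>2 \<partial>M)"
    using i by (intro nn_integral_eq_integral) auto
  also have "\<dots> = ennreal ((norm v)\<^sup>2 * (\<integral>x. (norm (F x))\<^sup>2 \<partial>M))" by simp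
  finally show ?thesis .
qed


lemma frame_of_inj:
  fixes F :: "'a \<Rightarrow> complex^'n"
  assumes F: "F \<in> L2 M" and inj: "\<And>v. v \<noteq> 0 \<Longrightarrow> \<not> (AE x in M. cinner v (F x) = 0)"
  shows "cont_frame M F"
proof -
  define Q where "Q v = (\<integral>x. (cmod (cinner v (F x)))\<^sup>2 \<partial>M)" for v
  define K where "K = (\<integral>x. (norm (F x))\<^sup>2 \<partial>M)"
  have iF: "integrable M (\<lambda>x. (norm (F x))\<^sup>2)" using F by (auto simp: L2_def)
  have K0: "0 \<le> K" unfolding K_def by simp
  have nn: "(\<integral>\<^sup>+x. ennreal ((cmod (cinner v (F x)))\<^sup>2) \<partial>M) = ennreal (Q v)" for v
    unfolding Q_def by (intro nn_integral_eq_integral integrable_Q[OF F]) auto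
  have lip: "dist (Q v) (Q w) \<le> (2*K) * dist v w" if vw: "v \<in> sphere 0 1" "w \<in> sphere 0 1" for v w
  proof -
    have pw: "\<bar>(cmod (cinner v (F x)))\<^sup>2 - (cmod (cinner w (F x)))\<^sup>2\<bar> \<le> 2 * dist v w * (norm (F x))\<^sup>2" for x
    proof -
      define a where "a = cmod (cinner v (F x))"
      define c where "c = cmod (cinner w (F x))"
      have "\<bar>a - c\<bar> \<le> cmod (cinner v (F x) - cinner w (F x))" unfolding a_def c_def by (rule norm_triangle_ineq3)
      also have "\<dots> = cmod (cinner (v - w) (F x))" by (simp add: cinner_diff_left)
      also have "\<dots> \<le> dist v w * norm (F x)" using cmod_cinner_le by (simp add: dist_norm)
      finally have d: "\<bar>a - c\<bar> \<le> dist v w * norm (F x)" .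
      have s: "a + c \<le> 2 * norm (F x)" unfolding a_def c_def
        using cmod_cinner_le[of v "F x"] cmod_cinner_le[of w "F x"] vw by simp
      have ac0: "0 \<le> a + c" unfolding a_def c_def by simp
      have "a\<^sup>2 - c\<^sup>2 = (a - c) * (a + c)" by (simp add: power2_eq_square algebra_simps)
      then have "\<bar>a\<^sup>2 - c\<^sup>2\<bar> = \<bar>a - c\<bar> * (a + c)" using ac0 by (simp add: abs_mult)
      also have "\<dots> \<le> (dist v w * norm (F x)) * (2 * norm (F x))"
        by (intro mult_mono d s) (use ac0 in auto)
      finally show ?thesis unfolding a_def c_def by (simp add: power2_eq_square algebra_simps)
    qed
    have i1: "integrable M (\<lambda>x. (cmod (cinner v (F x)))\<^sup>2)" by (rule integrable_Q[OF F])
    have i2: "integrable M (\<lambda>x. (cmod (cinner w (F x)))\<^sup>2)" by (rule integrable_Q[OF F])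
    have ig: "integrable M (\<lambda>x. 2 * dist v w * (norm (F x))\<^sup>2)" using iF by simp
    have "Q v - Q w = (\<integral>x. (cmod (cinner v (F x)))\<^sup>2 - (cmod (cinner w (F x)))\<^sup>2 \<partial>M)"
      unfolding Q_def by (rule Bochner_Integration.integral_diff[symmetric, OF i1 i2])
    also have "\<dots> \<le> (\<integral>x. 2 * dist v w * (norm (F x))\<^sup>2 \<partial>M)"
      by (rule integral_mono[OF _ ig]) (use i1 i2 pw in \<open>auto simp: abs_le_iff\<close>)
    finally have 1: "Q v - Q w \<le> 2 * dist v w * K" by (simp add: K_def)
    have "Q w - Q v = (\<integral>x. (cmod (cinner w (F x)))\<^sup>2 - (cmod (cinner v (F x)))\<^sup>2 \<partial>M)"
      unfolding Q_def by (rule Bochner_Integration.integral_diff[symmetric, OF i2 i1])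
    also have "\<dots> \<le> (\<integral>x. 2 * dist v w * (norm (F x))\<^sup>2 \<partial>M)"
      by (rule integral_mono[OF _ ig]) (use i1 i2 pw in \<open>auto simp: abs_le_iff\<close>)
    finally have 2: "Q w - Q v \<le> 2 * dist v w * K" by (simp add: K_def)
    show ?thesis using 1 2 by (simp add: dist_real_def abs_le_iff algebra_simps)
  qed
  have cont: "continuous_on (sphere 0 1) Q"
    by (rule lipschitz_on_continuous_on[OF lipschitz_onI[OF lip]]) (use K0 in auto)
  obtain u where u: "u \<in> sphere 0 1" "\<forall>y\<in>sphere 0 1. Q u \<le> Q y"
    using continuous_attains_inf[OF compact_sphere _ cont] by auto
  have Qnn: "0 \<le> Q v" for v unfolding Q_def by simp
  have Apos: "0 < Q u"
  proof (rule ccontr)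
    assume "\<not> 0 < Q u" then have "Q u = 0" using Qnn[of u] by simp
    then have "AE x in M. (cmod (cinner u (F x)))\<^sup>2 = 0"
      unfolding Q_def using integral_nonneg_eq_0_iff_AE[OF integrable_Q[OF F]] by auto
    then have "AE x in M. cinner u (F x) = 0" by eventually_elim simp
    moreover have "u \<noteq> 0" using u by auto
    ultimately show False using inj by blast
  qed
  have lower: "Q u * (norm v)\<^sup>2 \<le> Q v" for v
  proof (cases "v = 0")
    case True then show ?thesis by (simp add: Q_def)
  next
    case False
    define w where "w = (1 / norm v) *\<^sub>R v"
    have w: "w \<in> sphere 0 1" using False by (simp add: w_def)
    have vw: "v = norm v *\<^sub>R w" using False by (simp add: w_def)
    have "Q (norm v *\<^sub>R w) = (norm v)\<^sup>2 * Q w"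
      unfolding Q_def by (simp add: cinner_scaleR_left norm_mult power_mult_distrib)
    then have "Q v = (norm v)\<^sup>2 * Q w" using vw by metis
    moreover have "Q u \<le> Q w" using u(2) w by blast
    ultimately show ?thesis by (metis mult.commute mult_right_mono zero_le_power2)
  qed
  have main: "ennreal (Q u * (norm v)\<^sup>2) \<le> (\<integral>\<^sup>+x. ennreal ((cmod (cinner v (F x)))\<^sup>2) \<partial>M) \<and>
     (\<integral>\<^sup>+x. ennreal ((cmod (cinner v (F x)))\<^sup>2) \<partial>M) \<le> ennreal (max (Q u) K * (norm v)\<^sup>2)" for v
  proof
    show "ennreal (Q u * (norm v)\<^sup>2) \<le> (\<integral>\<^sup>+x. ennreal ((cmod (cinner v (F x)))\<^sup>2) \<partial>M)"
      unfolding nn using lower by (simp add: ennreal_leI)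
    have "(\<integral>\<^sup>+x. ennreal ((cmod (cinner v (F x)))\<^sup>2) \<partial>M) \<le> ennreal ((norm v)\<^sup>2 * K)"
      using Q_upper[OF F] by (simp add: K_def)
    also have "\<dots> \<le> ennreal (max (Q u) K * (norm v)\<^sup>2)"
      by (intro ennreal_leI) (simp add: mult.commute mult_right_mono)
    finally show "(\<integral>\<^sup>+x. ennreal ((cmod (cinner v (F x)))\<^sup>2) \<partial>M) \<le> ennreal (max (Q u) K * (norm v)\<^sup>2)" .
  qed
  have le: "Q u \<le> max (Q u) K" by simp
  show ?thesis unfolding cont_frame_def using F Apos le main by blast
qed


lemma Phi_zero:
  fixes P :: "'a \<Rightarrow> complex^'n"
  assumes P: "cont_frame M P" and AE: "AE x in M. cinner u (P x) = 0"
  shows "u = 0"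
proof -
  obtain A where A: "0 < A" and low: "ennreal (A * (norm u)\<^sup>2) \<le> (\<integral>\<^sup>+x. ennreal ((cmod (cinner u (P x)))\<^sup>2) \<partial>M)"
    using P unfolding cont_frame_def by blast
  have "(\<integral>\<^sup>+x. ennreal ((cmod (cinner u (P x)))\<^sup>2) \<partial>M) = (\<integral>\<^sup>+x. 0 \<partial>M)"
    by (rule nn_integral_cong_AE) (use AE in \<open>eventually_elim, simp\<close>)
  then have "ennreal (A * (norm u)\<^sup>2) \<le> 0" using low by simp
  then have "A * (norm u)\<^sup>2 \<le> 0" using ennreal_eq_0_iff by (metis le_zero_eq)
  then have "(norm u)\<^sup>2 \<le> 0" using A by (simp add: mult_le_0_iff)
  then show ?thesis by simp
qed




lemma bad_finite:
  fixes G P :: "'a \<Rightarrow> complex^'n"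
  assumes P: "cont_frame M P"
  shows "finite {t::real. \<exists>v. v \<noteq> 0 \<and> (AE x in M. cinner v (G x) + of_real t * cinner v (P x) = 0)}"
    (is "finite ?Bad")
proof -
  define vv where "vv t = (SOME v. v \<noteq> 0 \<and> (AE x in M. cinner v (G x) + of_real t * cinner v (P x) = 0))" for t
  have vv: "vv t \<noteq> 0 \<and> (AE x in M. cinner (vv t) (G x) + of_real t * cinner (vv t) (P x) = 0)"
    if "t \<in> ?Bad" for t
    using that unfolding vv_def by (rule CollectE) (rule someI_ex)
  have claim: "T \<subseteq> ?Bad \<Longrightarrow> \<forall>c. (\<Sum>t\<in>T. c t *\<^sub>R vv t) = 0 \<longrightarrow> (\<forall>t\<in>T. c t = 0)"
    if "finite T" for T
    using that
  proof (induction T rule: finite_induct)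
    case empty then show ?case by simp
  next
    case (insert s T)
    show ?case
    proof (intro allI impI)
      fix c :: "real \<Rightarrow> real"
      assume sum0: "(\<Sum>t\<in>insert s T. c t *\<^sub>R vv t) = 0"
      have AEall: "AE x in M. \<forall>t\<in>insert s T. cinner (vv t) (G x) + of_real t * cinner (vv t) (P x) = 0"
      proof (rule eventually_ball_finite)
        show "finite (insert s T)" using insert.hyps by simp
        show "\<forall>t\<in>insert s T. AE x in M. cinner (vv t) (G x) + of_real t * cinner (vv t) (P x) = 0"
        proof
          fix t assume "t \<in> insert s T"
          then have "t \<in> ?Bad" using insert.prems by blast
          then show "AE x in M. cinner (vv t) (G x) + of_real t * cinner (vv t) (P x) = 0" using vv by blast
        qed
      qed
      have "AE x in M. cinner (\<Sum>t\<in>T. (c t * (t - s)) *\<^sub>R vv t) (P x) = 0"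
        using AEall
      proof eventually_elim
        case (elim x)
        define p where "p t = cinner (vv t) (P x)" for t
        have g: "cinner (vv t) (G x) = - of_real t * p t" if "t \<in> insert s T" for t
          using elim that unfolding p_def by (auto simp: add_eq_0_iff2)
        have "0 = cinner (\<Sum>t\<in>insert s T. c t *\<^sub>R vv t) (G x)" using sum0 by simp
        also have "\<dots> = (\<Sum>t\<in>insert s T. of_real (c t) * cinner (vv t) (G x))"
          by (simp add: cinner_sum_left cinner_scaleR_left)
        also have "\<dots> = (\<Sum>t\<in>insert s T. - (of_real (c t) * of_real t * p t))"
          by (rule sum.cong) (auto simp: g)
        finally have E1: "of_real (c s) * of_real s * p s + (\<Sum>t\<in>T. of_real (c t) * of_real t * p t) = 0"
          using insert.hyps by (simp add: sum_negf) (metis add_eq_0_iff2 minus_minus neg_0_equal_iff_equal)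
        have "0 = cinner (\<Sum>t\<in>insert s T. c t *\<^sub>R vv t) (P x)" using sum0 by simp
        also have "\<dots> = (\<Sum>t\<in>insert s T. of_real (c t) * p t)"
          by (simp add: cinner_sum_left cinner_scaleR_left p_def)
        finally have E2: "of_real (c s) * p s + (\<Sum>t\<in>T. of_real (c t) * p t) = 0"
          using insert.hyps by simp
        have "cinner (\<Sum>t\<in>T. (c t * (t - s)) *\<^sub>R vv t) (P x)
            = (\<Sum>t\<in>T. of_real (c t) * of_real t * p t - of_real s * (of_real (c t) * p t))"
          unfolding cinner_sum_left
          apply (rule sum.cong, simp)
          apply (simp only: cinner_scaleR_left p_def)
          apply (simp add: algebra_simps)
          done
        also have "\<dots> = (\<Sum>t\<in>T. of_real (c t) * of_real t * p t) - of_real s * (\<Sum>t\<in>T. of_real (c t) * p t)"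
          by (simp only: sum_subtractf sum_distrib_left)
        also have "\<dots> = 0"
        proof -
          have a: "(\<Sum>t\<in>T. of_real (c t) * of_real t * p t) = - (of_real (c s) * of_real s * p s)"
            by (metis E1 add.commute add_eq_0_iff2)
          have b: "(\<Sum>t\<in>T. of_real (c t) * p t) = - (of_real (c s) * p s)"
            by (metis E2 add.commute add_eq_0_iff2)
          show ?thesis unfolding a b by (simp add: mult.commute mult.left_commute)
        qed
        finally show ?case .
      qed
      then have z: "(\<Sum>t\<in>T. (c t * (t - s)) *\<^sub>R vv t) = 0" by (rule Phi_zero[OF P])
      have cT: "\<forall>t\<in>T. c t = 0"
      proof
        fix t assume t: "t \<in> T"
        have TB: "T \<subseteq> ?Bad" using insert.prems by blast
        have "c t * (t - s) = 0" using spec[OF insert.IH[OF TB], of "\<lambda>t. c t * (t - s)"] z t by simp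
        moreover have "t \<noteq> s" using t insert.hyps by auto
        ultimately show "c t = 0" by simp
      qed
      then have "c s *\<^sub>R vv s = 0" using sum0 insert.hyps by simp
      moreover have "vv s \<noteq> 0" using vv insert.prems by auto
      ultimately have "c s = 0" by simp
      with cT show "\<forall>t\<in>insert s T. c t = 0" by simp
    qed
  qed
  have inj: "inj_on vv T" if "T \<subseteq> ?Bad" for T
  proof (rule inj_onI)
    fix s t assume st: "s \<in> T" "t \<in> T" "vv s = vv t"
    show "s = t"
    proof (rule ccontr)
      assume ne: "s \<noteq> t"
      have "AE x in M. cinner (vv s) (P x) = 0"
        using vv[of s] vv[of t] st that
      proof -
        have "AE x in M. cinner (vv s) (G x) + of_real s * cinner (vv s) (P x) = 0"
             "AE x in M. cinner (vv s) (G x) + of_real t * cinner (vv s) (P x) = 0"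
          using vv[of s] vv[of t] st that by auto
        then show ?thesis
        proof eventually_elim
          case (elim x)
          then have "of_real s * cinner (vv s) (P x) = of_real t * cinner (vv s) (P x)"
            by (metis add_left_cancel)
          then have "(of_real s - of_real t) * cinner (vv s) (P x) = 0" by (simp add: left_diff_distrib)
          then show ?case using ne by simp
        qed
      qed
      then have "vv s = 0" by (rule Phi_zero[OF P])
      then show False using vv[of s] st that by auto
    qed
  qed
  have card: "card T \<le> DIM(complex^'n)" if T: "finite T" "T \<subseteq> ?Bad" for T
  proof -
    have "independent (vv ` T)"
    proof
      assume "dependent (vv ` T)"
      then obtain u where u: "\<exists>v\<in>vv ` T. u v \<noteq> 0" "(\<Sum>v\<in>vv ` T. u v *\<^sub>R v) = 0"
        using real_vector.dependent_finite[of "vv ` T"] T by auto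
      have "(\<Sum>t\<in>T. u (vv t) *\<^sub>R vv t) = 0"
        using u(2) by (simp add: sum.reindex[OF inj[OF T(2)]])
      then have "\<forall>t\<in>T. u (vv t) = 0" using spec[OF claim[OF T(1) T(2)], of "\<lambda>t. u (vv t)"] by simp
      then show False using u(1) by auto
    qed
    then have "card (vv ` T) \<le> DIM(complex^'n)" using independent_bound by blast
    then show ?thesis using card_image[OF inj[OF T(2)]] by simp
  qed
  show ?thesis
  proof (rule ccontr)
    assume "infinite ?Bad"
    then obtain T where "finite T" "card T = Suc DIM(complex^'n)" "T \<subseteq> ?Bad"
      using infinite_arbitrarily_large by blast
    then show False using card by fastforce
  qed
qed



theorem corollary6p6:
  fixes M :: "'a measure" and h :: "'a \<Rightarrow> complex" and b :: "complex^'n"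
    and \<Phi> :: "'a \<Rightarrow> complex^'n"
  assumes "sigma_finite_measure M"
    and "b \<noteq> 0"
    and "h \<in> Linfty M"
    and "\<Phi> \<in> L2 M" and "qmap M h b \<Phi> = 0"
    and "cont_frame M \<Phi>"
  shows "\<forall>G \<in> S_set M h b \<Phi>. \<forall>\<epsilon>>0. \<exists>F \<in> frames M \<inter> S_set M h b \<Phi>.
           L2norm M (\<lambda>x. F x - G x) < \<epsilon>"
proof (intro ballI allI impI)
  fix G \<epsilon> assume GS: "G \<in> S_set M h b \<Phi>" and \<epsilon>: "(\<epsilon>::real) > 0"
  have GL2: "G \<in> L2 M" using GS by (simp add: S_set_def)
  define Bad where "Bad = {t::real. \<exists>v. v \<noteq> 0 \<and> (AE x in M. cinner v (G x) + of_real t * cinner v (\<Phi> x) = 0)}"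
  have fin: "finite Bad" unfolding Bad_def by (rule bad_finite[OF assms(6)])
  define N where "N = L2norm M \<Phi>"
  have N0: "0 \<le> N" unfolding N_def L2norm_def by simp
  define \<delta> where "\<delta> = \<epsilon> / (N + 1)"
  have \<delta>: "0 < \<delta>" using \<epsilon> N0 by (simp add: \<delta>_def)
  have "infinite ({0<..<\<delta>} - Bad)" using fin \<delta> by (intro Diff_infinite_finite infinite_Ioo)
  then obtain t where t: "t \<in> {0<..<\<delta>}" "t \<notin> Bad"
    by (metis Diff_iff finite.emptyI ex_in_conv)
  define F where "F = (\<lambda>x. G x + t *\<^sub>R \<Phi> x)"
  have FS: "F \<in> S_set M h b \<Phi>" unfolding F_def by (rule S_comb[OF assms(3) assms(4) assms(5) GS])
  have FL2: "F \<in> L2 M" unfolding F_def by (rule L2_comb[OF GL2 assms(4)])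
  have Ff: "cont_frame M F"
  proof (rule frame_of_inj[OF FL2])
    fix v :: "complex^'n" assume v: "v \<noteq> 0"
    show "\<not> (AE x in M. cinner v (F x) = 0)"
    proof
      assume "AE x in M. cinner v (F x) = 0"
      then have "AE x in M. cinner v (G x) + of_real t * cinner v (\<Phi> x) = 0"
        by (simp add: F_def cinner_add_right cinner_scaleR_right)
      then have "t \<in> Bad" using v unfolding Bad_def by blast
      then show False using t by simp
    qed
  qed
  have "L2norm M (\<lambda>x. F x - G x) = sqrt (\<integral>x. t\<^sup>2 * (norm (\<Phi> x))\<^sup>2 \<partial>M)"
    unfolding L2norm_def F_def by (simp add: power_mult_distrib)
  also have "\<dots> = t * N"
    using t by (simp add: N_def L2norm_def real_sqrt_mult)
  also have "\<dots> \<le> \<delta> * N" using t N0 by (intro mult_right_mono) auto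
  also have "\<dots> < \<epsilon>" using \<epsilon> N0 by (simp add: \<delta>_def field_simps)
  finally have "L2norm M (\<lambda>x. F x - G x) < \<epsilon>" .
  then show "\<exists>F \<in> frames M \<inter> S_set M h b \<Phi>. L2norm M (\<lambda>x. F x - G x) < \<epsilon>"
    using FS Ff by (auto simp: frames_def)
qed

end
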